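(* Let $\mathcal{S}$ be a state space and let $\mathsf{M}^{(1)},\mathsf{M}^{(2)}$ be dichotomic measurements on $\mathcal{S}$ with outcomes $\{+,-\}$. Then $\mathsf{M}^{(1)}$ and $\mathsf{M}^{(2)}$ are maximally incompatible if and only if $\bar P(\mathsf{M}^{(1)},\mathsf{M}^{(2)})=1$ with optimal states that can be chosen affinely dependent, i.e., if and only if there exist affinely dependent states $s_1,s_2,s_3,s_4\in\mathcal{S}$ with $\mathsf{M}^{(1)}_+(s_1)=\mathsf{M}^{(1)}_+(s_2)=1$, $\mathsf{M}^{(1)}_+(s_3)=\mathsf{M}^{(1)}_+(s_4)=0$, $\mathsf{M}^{(2)}_+(s_1)=\mathsf{M}^{(2)}_+(s_4)=1$, $\mathsf{M}^{(2)}_+(s_2)=\mathsf{M}^{(2)}_+(s_3)=0$.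
   Context: General probabilistic theory setting: a state space $\mathcal{S}$ is a compact convex subset of a finite-dimensional real vector space, embedded as a base of a closed generating proper cone in a vector space $V$, with unit effect $u$. Effects are linear functionals $e$ on $V$ with $0\le e\le1$ on $\mathcal{S}$; $\|f\|=\max_{s\in\mathcal{S}}|f(s)|$. A measurement with finite outcome set $\Omega$ is a map $x\mapsto\mathsf{M}_x$ to effects with $\sum_x\mathsf{M}_x=u$; a dichotomic measurement has outcome set $\{+,-\}$. For dichotomic $\mathsf{M}^{(1)},\mathsf{M}^{(2)}$, $\bar P(\mathsf{M}^{(1)},\mathsf{M}^{(2)})=\frac18\sum_{x,y\in\{+,-\}}\|\mathsf{M}^{(1)}_x+\mathsf{M}^{(2)}_y\|$. A measurement $\mathsf{T}$ is trivial if $\mathsf{T}_x=p_xu$ for a probability distribution $(p_x)$. Two measurements with outcome sets $\Omega_1,\Omega_2$ are compatible if there is a measurement $\mathsf{J}$ on $\Omega_1\times\Omega_2$ whose marginals are the two measurements. The degree of incompatibility $d(\mathsf{M}^{(1)},\mathsf{M}^{(2)})$ is the maximal $\lambda\in[0,1]$ such that $\lambda\mathsf{M}^{(1)}+(1-\lambda)\mathsf{T}^{(1)}$ and $\lambda\mathsf{M}^{(2)}+(1-\lambda)\mathsf{T}^{(2)}$ are compatible for some trivial $\mathsf{T}^{(1)},\mathsf{T}^{(2)}$; the measurements are maximally incompatible if $d(\mathsf{M}^{(1)},\mathsf{M}^{(2)})=\frac12$. *)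

theory Defs
  imports "HOL-Analysis.Analysis"
begin

(* The ambient finite-dimensional real vector space V
is a Euclidean-space type 'a.  The state space S is a compact convex nonempty subset of V
which is a base of the closed, generating, proper cone {t *_R s | t \<ge> 0, s \<in> S}; this is
encoded by a linear unit effect u with u = 1 on S (so 0 is not in S, the cone is closed
and pointed, and S is its base) and span S = V (the cone is generating). *)

definition state_space :: "'a::euclidean_space set \<Rightarrow> ('a \<Rightarrow> real) \<Rightarrow> bool" where
  "state_space S u \<longleftrightarrow> compact S \<and> convex S \<and> S \<noteq> {} \<and> linear u \<and>
     (\<forall>s\<in>S. u s = 1) \<and> span S = UNIV"

definition effect :: "'a::euclidean_space set \<Rightarrow> ('a \<Rightarrow> real) \<Rightarrow> bool" where
  "effect S e \<longleftrightarrow> linear e \<and> (\<forall>s\<in>S. 0 \<le> e s \<and> e s \<le> 1)"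

definition measurement ::
  "'a::euclidean_space set \<Rightarrow> ('a \<Rightarrow> real) \<Rightarrow> 'b set \<Rightarrow> ('b \<Rightarrow> 'a \<Rightarrow> real) \<Rightarrow> bool" where
  "measurement S u \<Omega> M \<longleftrightarrow> finite \<Omega> \<and> (\<forall>x\<in>\<Omega>. effect S (M x)) \<and>
     (\<forall>v. (\<Sum>x\<in>\<Omega>. M x v) = u v)"

datatype pm = Plus | Minus

definition dichotomic :: "pm set" where "dichotomic = {Plus, Minus}"

definition gnorm :: "'a set \<Rightarrow> ('a \<Rightarrow> real) \<Rightarrow> real" where
  "gnorm S f = Sup ((\<lambda>s. \<bar>f s\<bar>) ` S)"

definition Pbar :: "'a set \<Rightarrow> (pm \<Rightarrow> 'a \<Rightarrow> real) \<Rightarrow> (pm \<Rightarrow> 'a \<Rightarrow> real) \<Rightarrow> real" where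
  "Pbar S M1 M2 = (1/8) * (\<Sum>x\<in>dichotomic. \<Sum>y\<in>dichotomic. gnorm S (\<lambda>v. M1 x v + M2 y v))"

definition trivial_meas ::
  "('a \<Rightarrow> real) \<Rightarrow> 'b set \<Rightarrow> ('b \<Rightarrow> 'a \<Rightarrow> real) \<Rightarrow> bool" where
  "trivial_meas u \<Omega> T \<longleftrightarrow> (\<exists>p. (\<forall>x\<in>\<Omega>. 0 \<le> p x) \<and> (\<Sum>x\<in>\<Omega>. p x) = 1 \<and>
      (\<forall>x\<in>\<Omega>. T x = (\<lambda>v. p x * u v)))"

definition compatible ::
  "'a::euclidean_space set \<Rightarrow> ('a \<Rightarrow> real) \<Rightarrow> 'b set \<Rightarrow> 'c set \<Rightarrow>
     ('b \<Rightarrow> 'a \<Rightarrow> real) \<Rightarrow> ('c \<Rightarrow> 'a \<Rightarrow> real) \<Rightarrow> bool" where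
  "compatible S u \<Omega>1 \<Omega>2 M1 M2 \<longleftrightarrow> (\<exists>J. measurement S u (\<Omega>1 \<times> \<Omega>2) J \<and>
      (\<forall>x\<in>\<Omega>1. \<forall>v. (\<Sum>y\<in>\<Omega>2. J (x, y) v) = M1 x v) \<and>
      (\<forall>y\<in>\<Omega>2. \<forall>v. (\<Sum>x\<in>\<Omega>1. J (x, y) v) = M2 y v))"

(* Degree of incompatibility: the maximal l in [0,1] admitting compatible noisy versions
(written as a supremum; the set is nonempty since l = 0 always works). *)
definition degree_incomp ::
  "'a::euclidean_space set \<Rightarrow> ('a \<Rightarrow> real) \<Rightarrow> 'b set \<Rightarrow> 'c set \<Rightarrow>
     ('b \<Rightarrow> 'a \<Rightarrow> real) \<Rightarrow> ('c \<Rightarrow> 'a \<Rightarrow> real) \<Rightarrow> real" where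
  "degree_incomp S u \<Omega>1 \<Omega>2 M1 M2 = Sup {l. 0 \<le> l \<and> l \<le> 1 \<and>
     (\<exists>T1 T2. trivial_meas u \<Omega>1 T1 \<and> trivial_meas u \<Omega>2 T2 \<and>
        compatible S u \<Omega>1 \<Omega>2 (\<lambda>x v. l * M1 x v + (1 - l) * T1 x v)
                                (\<lambda>y v. l * M2 y v + (1 - l) * T2 y v))}"

definition max_incompatible ::
  "'a::euclidean_space set \<Rightarrow> ('a \<Rightarrow> real) \<Rightarrow> (pm \<Rightarrow> 'a \<Rightarrow> real) \<Rightarrow> (pm \<Rightarrow> 'a \<Rightarrow> real) \<Rightarrow> bool" where
  "max_incompatible S u M1 M2 \<longleftrightarrow> degree_incomp S u dichotomic dichotomic M1 M2 = 1/2"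

end

theory Submission
  imports Defs
begin

lemma lin4:
  assumes "linear p" "linear q" "linear r" "linear w"
  shows "linear (\<lambda>v. a * p v + b * q v + c * r v + d * w v :: real)"
  using assms unfolding linear_iff
  by (simp add: algebra_simps)

lemma meas_facts:
  assumes "measurement S u dichotomic M"
  shows "linear (M Plus)" "\<And>s. s \<in> S \<Longrightarrow> 0 \<le> M Plus s" "\<And>s. s \<in> S \<Longrightarrow> M Plus s \<le> 1"
    "\<And>v. M Minus v = u v - M Plus v"
proof -
  show "linear (M Plus)" "\<And>s. s \<in> S \<Longrightarrow> 0 \<le> M Plus s" "\<And>s. s \<in> S \<Longrightarrow> M Plus s \<le> 1"
    using assms unfolding measurement_def effect_def dichotomic_def by auto
  fix v
  have "M Plus v + M Minus v = u v"
    using assms unfolding measurement_def dichotomic_def by auto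
  then show "M Minus v = u v - M Plus v" by linarith
qed

lemma ss_facts:
  assumes "state_space S u"
  shows "linear u" "\<And>s. s \<in> S \<Longrightarrow> u s = 1" "compact S" "convex S" "S \<noteq> {}"
  using assms unfolding state_space_def by auto

lemma lin_cont:
  fixes e :: "'a::euclidean_space \<Rightarrow> real"
  assumes "linear e" shows "continuous_on X e"
  using assms linear_conv_bounded_linear linear_continuous_on by blast

lemma gnorm_two:
  assumes "\<And>s. s \<in> S \<Longrightarrow> \<bar>g s\<bar> \<le> 2" "s0 \<in> S" "g s0 = 2"
  shows "gnorm S g = 2"
  unfolding gnorm_def
  by (rule cSup_eq_maximum) (use assms in force)+

lemma meas_bounds:
  assumes "state_space S u" "measurement S u dichotomic M" "s \<in> S"
  shows "0 \<le> M x s \<and> M x s \<le> 1"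
  using meas_facts[OF assms(2)] ss_facts[OF assms(1)] assms(3)
  by (cases x) auto

lemma pbar_one:
  assumes ss: "state_space S u" and m1: "measurement S u dichotomic M1"
    and m2: "measurement S u dichotomic M2"
    and st: "s1 \<in> S" "s2 \<in> S" "s3 \<in> S" "s4 \<in> S"
    and v: "M1 Plus s1 = 1" "M1 Plus s2 = 1" "M1 Plus s3 = 0" "M1 Plus s4 = 0"
        "M2 Plus s1 = 1" "M2 Plus s4 = 1" "M2 Plus s2 = 0" "M2 Plus s3 = 0"
  shows "Pbar S M1 M2 = 1"
proof -
  have g: "gnorm S (\<lambda>v. M1 x v + M2 y v) = 2" for x y
  proof (rule gnorm_two)
    show "\<bar>M1 x s + M2 y s\<bar> \<le> 2" if "s \<in> S" for s
      using meas_bounds[OF ss m1 that, of x] meas_bounds[OF ss m2 that, of y] by auto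
    let ?w = "case (x, y) of (Plus, Plus) \<Rightarrow> s1 | (Plus, Minus) \<Rightarrow> s2
       | (Minus, Minus) \<Rightarrow> s3 | (Minus, Plus) \<Rightarrow> s4"
    show "?w \<in> S" using st by (cases x; cases y) auto
    show "M1 x ?w + M2 y ?w = 2"
      using v st meas_facts(4)[OF m1] meas_facts(4)[OF m2] ss_facts(2)[OF ss]
      by (cases x; cases y) auto
  qed
  show ?thesis unfolding Pbar_def dichotomic_def by (simp add: g)
qed

lemma compat_constr:
  assumes ss: "state_space S u" and m1: "measurement S u dichotomic M1"
    and m2: "measurement S u dichotomic M2"
    and lk: "linear k"
    and c1: "\<And>s. s \<in> S \<Longrightarrow> 0 \<le> k s"
    and c2: "\<And>s. s \<in> S \<Longrightarrow> k s \<le> l * M1 Plus s + (1 - l) * (1/2 * u s)"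
    and c3: "\<And>s. s \<in> S \<Longrightarrow> k s \<le> l * M2 Plus s + (1 - l) * (1/2 * u s)"
    and c4: "\<And>s. s \<in> S \<Longrightarrow> (l * M1 Plus s + (1 - l) * (1/2 * u s))
          + (l * M2 Plus s + (1 - l) * (1/2 * u s)) - u s \<le> k s"
  shows "\<exists>T1 T2. trivial_meas u dichotomic T1 \<and> trivial_meas u dichotomic T2 \<and>
        compatible S u dichotomic dichotomic (\<lambda>x v. l * M1 x v + (1 - l) * T1 x v)
                                (\<lambda>y v. l * M2 y v + (1 - l) * T2 y v)"
proof -
  define T :: "pm \<Rightarrow> 'a \<Rightarrow> real" where "T = (\<lambda>x v. 1/2 * u v)"
  have tr: "trivial_meas u dichotomic T"
    unfolding trivial_meas_def T_def dichotomic_def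
    by (rule exI[of _ "\<lambda>_. 1/2"]) simp
  define a where "a = (\<lambda>v. l * M1 Plus v + (1 - l) * (1/2 * u v))"
  define b where "b = (\<lambda>v. l * M2 Plus v + (1 - l) * (1/2 * u v))"
  define J :: "pm \<times> pm \<Rightarrow> 'a \<Rightarrow> real" where
    "J = (\<lambda>(x,y). case x of Plus \<Rightarrow> (case y of Plus \<Rightarrow> k | Minus \<Rightarrow> (\<lambda>v. a v - k v))
       | Minus \<Rightarrow> (case y of Plus \<Rightarrow> (\<lambda>v. b v - k v) | Minus \<Rightarrow> (\<lambda>v. u v - a v - b v + k v)))"
  have le: "linear (M1 Plus)" "linear (M2 Plus)" "linear u"
    using meas_facts[OF m1] meas_facts[OF m2] ss_facts[OF ss] by auto
  have lin0: "linear (J (x,y))" for x y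
    using le lk unfolding J_def a_def b_def linear_iff
    by (cases x; cases y) (simp_all add: field_simps)
  have lin: "linear (J p)" for p using lin0 by (cases p) auto
  have Jv: "J (Plus,Plus) s = k s" "J (Plus,Minus) s = a s - k s" "J (Minus,Plus) s = b s - k s"
    "J (Minus,Minus) s = u s - a s - b s + k s" for s
    by (simp_all add: J_def)
  have bnd0: "0 \<le> J (x,y) s \<and> J (x,y) s \<le> 1" if "s \<in> S" for x y s
  proof -
    have "0 \<le> k s" "k s \<le> a s" "k s \<le> b s" "a s + b s - u s \<le> k s" "u s = 1"
      using c1[OF that] c2[OF that] c3[OF that] c4[OF that] ss_facts(2)[OF ss that]
      unfolding a_def b_def by auto
    then show ?thesis by (cases x; cases y) (simp_all only: Jv; linarith)+
  qed
  have bnd: "0 \<le> J p s \<and> J p s \<le> 1" if "s \<in> S" for p s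
    using bnd0[OF that] by (cases p) auto
  have meas: "measurement S u (dichotomic \<times> dichotomic) J"
    unfolding measurement_def effect_def
    using lin bnd by (simp add: dichotomic_def J_def a_def b_def)
  show ?thesis
    unfolding compatible_def
    apply (rule exI[of _ T], rule exI[of _ T])
    apply (simp add: tr)
    apply (rule exI[of _ J])
    using meas
    by (auto simp: dichotomic_def J_def a_def b_def T_def meas_facts(4)[OF m1] meas_facts(4)[OF m2]
       algebra_simps)
qed

lemma upper_half:
  assumes ss: "state_space S u" and m1: "measurement S u dichotomic M1"
    and m2: "measurement S u dichotomic M2"
    and st: "s1 \<in> S" "s2 \<in> S" "s3 \<in> S" "s4 \<in> S"
    and v: "M1 Plus s1 = 1" "M1 Plus s2 = 1" "M1 Plus s3 = 0" "M1 Plus s4 = 0"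
        "M2 Plus s1 = 1" "M2 Plus s4 = 1" "M2 Plus s2 = 0" "M2 Plus s3 = 0"
    and par: "s1 + s3 = s2 + s4"
    and t1: "trivial_meas u dichotomic T1" and t2: "trivial_meas u dichotomic T2"
    and c: "compatible S u dichotomic dichotomic (\<lambda>x v. l * M1 x v + (1 - l) * T1 x v)
                                (\<lambda>y v. l * M2 y v + (1 - l) * T2 y v)"
  shows "l \<le> 1/2"
proof -
  obtain p1 where p1: "T1 Plus = (\<lambda>v. p1 Plus * u v)"
    using t1 unfolding trivial_meas_def dichotomic_def by auto
  obtain p2 where p2: "T2 Plus = (\<lambda>v. p2 Plus * u v)"
    using t2 unfolding trivial_meas_def dichotomic_def by auto
  obtain J where J: "measurement S u (dichotomic \<times> dichotomic) J"
    and mar1: "\<forall>x\<in>dichotomic. \<forall>v. (\<Sum>y\<in>dichotomic. J (x, y) v) = l * M1 x v + (1 - l) * T1 x v"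
    and mar2: "\<forall>y\<in>dichotomic. \<forall>v. (\<Sum>x\<in>dichotomic. J (x, y) v) = l * M2 y v + (1 - l) * T2 y v"
    using c unfolding compatible_def by blast
  have dd: "dichotomic \<times> dichotomic = {(Plus,Plus),(Plus,Minus),(Minus,Plus),(Minus,Minus)}"
    unfolding dichotomic_def by auto
  have sumJ: "J (Plus,Plus) v + J (Plus,Minus) v + J (Minus,Plus) v + J (Minus,Minus) v = u v" for v
    using J unfolding measurement_def dd by (simp add: algebra_simps)
  have pos: "0 \<le> J p s" if "p \<in> dichotomic \<times> dichotomic" "s \<in> S" for p s
    using J that unfolding measurement_def effect_def by blast
  have ma1: "J (Plus,Plus) v + J (Plus,Minus) v = l * M1 Plus v + (1 - l) * (p1 Plus * u v)" for v
    using mar1 p1 unfolding dichotomic_def by auto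
  have ma2: "J (Plus,Plus) v + J (Minus,Plus) v = l * M2 Plus v + (1 - l) * (p2 Plus * u v)" for v
    using mar2 p2 unfolding dichotomic_def by auto
  have lj: "linear (J (Plus,Plus))"
    using J unfolding measurement_def effect_def dd by auto
  have jl: "J (Plus,Plus) s1 + J (Plus,Plus) s3 = J (Plus,Plus) s2 + J (Plus,Plus) s4"
    using linear_add[OF lj, of s1 s3] linear_add[OF lj, of s2 s4] par by simp
  have u1: "u s1 = 1" "u s2 = 1" "u s3 = 1" "u s4 = 1"
    using ss_facts(2)[OF ss] st by auto
  have "0 \<le> J (Minus,Minus) s1" "0 \<le> J (Plus,Plus) s3" "0 \<le> J (Minus,Plus) s2"
    "0 \<le> J (Plus,Minus) s4"
    using pos st unfolding dd by auto
  moreover note sumJ[of s1] ma1[of s1] ma2[of s1] ma2[of s2] ma1[of s4]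
  ultimately show ?thesis using jl v u1 by simp
qed

lemma aff_par:
  fixes s1 s2 s3 s4 :: "'a::euclidean_space" and e f u :: "'a \<Rightarrow> real"
  assumes le: "linear e" "linear f" "linear u"
    and u1: "u s1 = 1" "u s2 = 1" "u s3 = 1" "u s4 = 1"
    and v: "e s1 = 1" "e s2 = 1" "e s3 = 0" "e s4 = 0"
        "f s1 = 1" "f s4 = 1" "f s2 = 0" "f s3 = 0"
  shows "affine_dependent {s1, s2, s3, s4} \<longleftrightarrow> s1 + s3 = s2 + s4"
proof -
  have d: "s1 \<noteq> s2" "s1 \<noteq> s3" "s1 \<noteq> s4" "s2 \<noteq> s3" "s2 \<noteq> s4" "s3 \<noteq> s4"
    using v by auto
  have fin: "finite {s1, s2, s3, s4}" by simp
  show ?thesis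
  proof
    assume "affine_dependent {s1, s2, s3, s4}"
    then obtain U where U0: "sum U {s1, s2, s3, s4} = 0"
      and Unz: "\<exists>v\<in>{s1, s2, s3, s4}. U v \<noteq> 0"
      and Us: "(\<Sum>v\<in>{s1, s2, s3, s4}. U v *\<^sub>R v) = 0"
      using affine_dependent_explicit_finite[OF fin] by blast
    have U0': "U s1 + U s2 + U s3 + U s4 = 0" using U0 d by (simp add: algebra_simps)
    have Us': "U s1 *\<^sub>R s1 + U s2 *\<^sub>R s2 + U s3 *\<^sub>R s3 + U s4 *\<^sub>R s4 = 0"
      using Us d by (simp add: algebra_simps)
    have "e (U s1 *\<^sub>R s1 + U s2 *\<^sub>R s2 + U s3 *\<^sub>R s3 + U s4 *\<^sub>R s4) = 0"
      using Us' linear_0[OF le(1)] by simp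
    then have ce: "U s1 + U s2 = 0"
      using v by (simp add: linear_add[OF le(1)] linear_scale[OF le(1)])
    have "f (U s1 *\<^sub>R s1 + U s2 *\<^sub>R s2 + U s3 *\<^sub>R s3 + U s4 *\<^sub>R s4) = 0"
      using Us' linear_0[OF le(2)] by simp
    then have cf: "U s1 + U s4 = 0"
      using v by (simp add: linear_add[OF le(2)] linear_scale[OF le(2)])
    have c2: "U s2 = - U s1" and c4: "U s4 = - U s1" and c3: "U s3 = U s1"
      using ce cf U0' by linarith+
    have nz: "U s1 \<noteq> 0" using Unz c2 c3 c4 by auto
    have "U s1 *\<^sub>R ((s1 + s3) - (s2 + s4)) = 0"
      using Us' unfolding c2 c3 c4 by (simp add: algebra_simps)
    then show "s1 + s3 = s2 + s4" using nz by simp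
  next
    assume par: "s1 + s3 = s2 + s4"
    show "affine_dependent {s1, s2, s3, s4}"
      unfolding affine_dependent_explicit_finite[OF fin]
    proof (intro exI[of _ "\<lambda>v. if v = s1 \<or> v = s3 then 1 else -1"] conjI)
      show "(\<Sum>v\<in>{s1, s2, s3, s4}. (if v = s1 \<or> v = s3 then 1 else -1::real)) = 0"
        using d by simp
      show "\<exists>v\<in>{s1, s2, s3, s4}. (if v = s1 \<or> v = s3 then 1 else -1::real) \<noteq> 0"
        by simp
      have "s1 + s3 - (s2 + s4) = 0" using par by simp
      then show "(\<Sum>v\<in>{s1, s2, s3, s4}. (if v = s1 \<or> v = s3 then 1 else -1::real) *\<^sub>R v) = 0"
        using d by (simp add: algebra_simps)
    qed
  qed
qed

lemma perturb:
  fixes \<sigma> g :: "'a::euclidean_space \<Rightarrow> real"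
  assumes S: "compact S" and cs: "continuous_on S \<sigma>" and cg: "continuous_on S g"
    and nn: "\<And>s. s \<in> S \<Longrightarrow> 0 \<le> \<sigma> s"
    and zg: "\<And>s. s \<in> S \<Longrightarrow> \<sigma> s = 0 \<Longrightarrow> g s > 0"
  shows "\<exists>\<eta>>0. \<forall>s\<in>S. \<forall>t. 0 \<le> t \<and> t \<le> \<eta> \<longrightarrow> 0 \<le> \<sigma> s + t * g s"
proof (cases "S = {}")
  case True then show ?thesis by (intro exI[of _ 1]) auto
next
  case False
  have cpsi: "continuous_on S (\<lambda>s. max (\<sigma> s) (g s))"
    using cs cg by (intro continuous_on_max)
  obtain s0 where s0: "s0 \<in> S" "\<And>y. y \<in> S \<Longrightarrow> max (\<sigma> s0) (g s0) \<le> max (\<sigma> y) (g y)"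
    using continuous_attains_inf[OF S False cpsi] by blast
  define m where "m = max (\<sigma> s0) (g s0)"
  have m0: "m > 0"
  proof (cases "\<sigma> s0 = 0")
    case True then show ?thesis using zg[OF s0(1)] unfolding m_def by auto
  next
    case False then show ?thesis using nn[OF s0(1)] unfolding m_def by auto
  qed
  obtain s1 where s1: "s1 \<in> S" "\<And>y. y \<in> S \<Longrightarrow> g s1 \<le> g y"
    using continuous_attains_inf[OF S False cg] by blast
  define M where "M = max 1 (- g s1)"
  have M1: "M \<ge> 1" unfolding M_def by simp
  show ?thesis
  proof (intro exI[of _ "m / M"] conjI ballI allI impI)
    show "0 < m / M" using m0 M1 by simp
    fix s t assume s: "s \<in> S" and t: "0 \<le> t \<and> t \<le> m / M"
    show "0 \<le> \<sigma> s + t * g s"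
    proof (cases "g s \<ge> 0")
      case True then show ?thesis using nn[OF s] t by simp
    next
      case False
      have "m \<le> max (\<sigma> s) (g s)" using s0(2)[OF s] unfolding m_def .
      then have sm: "m \<le> \<sigma> s" using False m0 by linarith
      have gM: "- M \<le> g s" using s1(2)[OF s] unfolding M_def by linarith
      have "t * (- M) \<le> t * g s" using gM t by (intro mult_left_mono) auto
      moreover have "t * M \<le> m" using t M1 by (simp add: field_simps)
      ultimately show ?thesis using sm by linarith
    qed
  qed
qed

lemma face_props:
  fixes e f :: "'a::euclidean_space \<Rightarrow> real"
  assumes "compact S" "convex S" "linear e" "linear f"
  shows "compact {s\<in>S. e s = a \<and> f s = b}" "convex {s\<in>S. e s = a \<and> f s = b}"
proof -
  have eq: "{s\<in>S. e s = a \<and> f s = b} = S \<inter> {x. e x = a} \<inter> {x. f x = b}" by auto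
  have "closed {x. e x = a}" "closed {x. f x = b}"
    using closed_Collect_eq[OF lin_cont[OF assms(3)] continuous_on_const]
      closed_Collect_eq[OF lin_cont[OF assms(4)] continuous_on_const] by auto
  then show "compact {s\<in>S. e s = a \<and> f s = b}"
    unfolding eq using assms(1) by (intro compact_Int_closed closed_Int) auto
  have eq2: "{s\<in>S. e s = a \<and> f s = b} = S \<inter> e -` {a} \<inter> f -` {b}" by auto
  show "convex {s\<in>S. e s = a \<and> f s = b}"
    unfolding eq2 using assms(2,3,4) by (intro convex_Int convex_linear_vimage convex_singleton)
qed

lemma sep:
  fixes e f u :: "'a::euclidean_space \<Rightarrow> real"
  assumes ss: "state_space S u" and le: "linear e" "linear f"
    and nopar: "\<not> (\<exists>s1 s2 s3 s4. s1 \<in> S \<and> s2 \<in> S \<and> s3 \<in> S \<and> s4 \<in> S \<and>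
        e s1 = 1 \<and> f s1 = 1 \<and> e s2 = 1 \<and> f s2 = 0 \<and> e s3 = 0 \<and> f s3 = 0 \<and>
        e s4 = 0 \<and> f s4 = 1 \<and> s1 + s3 = s2 + s4)"
  shows "\<exists>h::'a \<Rightarrow> real. linear h \<and>
     (\<forall>s\<in>S. (e s = 1 \<and> f s = 1) \<or> (e s = 0 \<and> f s = 0) \<longrightarrow> h s > 0) \<and>
     (\<forall>s\<in>S. (e s = 1 \<and> f s = 0) \<or> (e s = 0 \<and> f s = 1) \<longrightarrow> h s < -1)"
proof -
  have lu: "linear u" and u1: "\<And>s. s \<in> S \<Longrightarrow> u s = 1" and cS: "compact S" and cvS: "convex S"
    using ss_facts[OF ss] by auto
  define F where "F = (\<lambda>a b. {s\<in>S. e s = a \<and> f s = b})"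
  have Fc: "compact (F a b)" "convex (F a b)" for a b
    unfolding F_def using face_props[OF cS cvS le] by auto
  define A where "A = F 1 1 \<union> F 0 0"
  define B where "B = F 1 0 \<union> F 0 1"
  have cA: "compact A" "compact B" unfolding A_def B_def using Fc by auto
  have AS: "A \<subseteq> S" "B \<subseteq> S" unfolding A_def B_def F_def by auto
  have linef: "linear (\<lambda>x. e x - f x)" "linear (\<lambda>x. e x + f x - u x)"
    using le lu unfolding linear_iff by (auto simp: algebra_simps)
  have disj: "convex hull A \<inter> convex hull B = {}"
  proof (rule ccontr)
    assume "convex hull A \<inter> convex hull B \<noteq> {}"
    then obtain z where zA: "z \<in> convex hull A" and zB: "z \<in> convex hull B" by blast
    have "z \<in> S" using zA hull_minimal[OF AS(1), of convex] cvS by blast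
    then have uz: "u z = 1" using u1 by blast
    have "convex hull A \<subseteq> (\<lambda>x. e x - f x) -` {0}"
      by (rule hull_minimal) (auto simp: A_def F_def intro!: convex_linear_vimage linef)
    then have z1: "e z - f z = 0" using zA by blast
    have "convex hull B \<subseteq> (\<lambda>x. e x + f x - u x) -` {0}"
      using u1 by (intro hull_minimal) (auto simp: B_def F_def intro!: convex_linear_vimage linef)
    then have z2: "e z + f z - u z = 0" using zB by blast
    have ez: "e z = 1/2" using z1 z2 uz by linarith
    have ne: "F 1 1 \<noteq> {}" "F 0 0 \<noteq> {}" "F 1 0 \<noteq> {}" "F 0 1 \<noteq> {}"
    proof -
      show "F 1 1 \<noteq> {}"
      proof
        assume "F 1 1 = {}"
        then have "z \<in> F 0 0" using zA Fc(2) unfolding A_def by (simp add: hull_same)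
        then show False using ez unfolding F_def by simp
      qed
      show "F 0 0 \<noteq> {}"
      proof
        assume "F 0 0 = {}"
        then have "z \<in> F 1 1" using zA Fc(2) unfolding A_def by (simp add: hull_same)
        then show False using ez unfolding F_def by simp
      qed
      show "F 1 0 \<noteq> {}"
      proof
        assume "F 1 0 = {}"
        then have "z \<in> F 0 1" using zB Fc(2) unfolding B_def by (simp add: hull_same)
        then show False using ez unfolding F_def by simp
      qed
      show "F 0 1 \<noteq> {}"
      proof
        assume "F 0 1 = {}"
        then have "z \<in> F 1 0" using zB Fc(2) unfolding B_def by (simp add: hull_same)
        then show False using ez unfolding F_def by simp
      qed
    qed
    obtain a1 b1 x y where xy: "a1 \<ge> 0" "b1 \<ge> 0" "a1 + b1 = 1" "x \<in> F 1 1" "y \<in> F 0 0"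
      "z = a1 *\<^sub>R x + b1 *\<^sub>R y"
      using zA unfolding A_def convex_hull_union_two[OF Fc(2) ne(1) Fc(2) ne(2)] by blast
    obtain a2 b2 x' y' where xy': "a2 \<ge> 0" "b2 \<ge> 0" "a2 + b2 = 1" "x' \<in> F 1 0" "y' \<in> F 0 1"
      "z = a2 *\<^sub>R x' + b2 *\<^sub>R y'"
      using zB unfolding B_def convex_hull_union_two[OF Fc(2) ne(3) Fc(2) ne(4)] by blast
    have "e z = a1" using xy unfolding F_def by (simp add: linear_add[OF le(1)] linear_scale[OF le(1)])
    then have a1: "a1 = 1/2" "b1 = 1/2" using ez xy(3) by auto
    have "e z = a2" using xy' unfolding F_def by (simp add: linear_add[OF le(1)] linear_scale[OF le(1)])
    then have a2: "a2 = 1/2" "b2 = 1/2" using ez xy'(3) by auto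
    have "(1/2::real) *\<^sub>R (x + y) = (1/2::real) *\<^sub>R (x' + y')"
      using xy(6) xy'(6) unfolding a1 a2 by (simp add: scaleR_right_distrib)
    then have "x + y = x' + y'" by simp
    then show False using nopar xy xy' unfolding F_def by blast
  qed
  show ?thesis
  proof (cases "B = {}")
    case True
    have "\<forall>s\<in>S. \<not> (e s = 1 \<and> f s = 0 \<or> e s = 0 \<and> f s = 1)"
      using True unfolding B_def F_def by auto
    then have "linear u \<and> (\<forall>s\<in>S. e s = 1 \<and> f s = 1 \<or> e s = 0 \<and> f s = 0 \<longrightarrow> 0 < u s) \<and>
         (\<forall>s\<in>S. e s = 1 \<and> f s = 0 \<or> e s = 0 \<and> f s = 1 \<longrightarrow> u s < - 1)"
      using lu u1 by auto
    then show ?thesis by blast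
  next
    case False
    have "B \<subseteq> convex hull B" by (rule hull_subset)
    then have hB: "convex hull B \<noteq> {}" using False by blast
    obtain a b where ab: "\<forall>x\<in>convex hull A. inner a x < b" "\<forall>x\<in>convex hull B. inner a x > b"
      using separating_hyperplane_closed_compact[OF convex_convex_hull
          compact_imp_closed[OF compact_convex_hull[OF cA(1)]] convex_convex_hull
          compact_convex_hull[OF cA(2)] hB disj] by blast
    have cont: "continuous_on B (\<lambda>x. inner a x - b)"
      by (intro continuous_intros)
    obtain x0 where x0: "x0 \<in> B" "\<And>y. y \<in> B \<Longrightarrow> inner a x0 - b \<le> inner a y - b"
      using continuous_attains_inf[OF cA(2) False cont] by blast
    define c where "c = inner a x0 - b"
    have c0: "c > 0" using ab(2) x0(1) hull_subset[of B convex] unfolding c_def by force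
    define h where "h = (\<lambda>x. (2 / c) * (b * u x - inner a x))"
    have lh: "linear h"
      using lu unfolding h_def linear_iff by (auto simp: algebra_simps inner_add_right)
    show ?thesis
    proof (intro exI[of _ h] conjI ballI impI lh)
      fix s assume s: "s \<in> S" "e s = 1 \<and> f s = 1 \<or> e s = 0 \<and> f s = 0"
      then have "s \<in> convex hull A" using hull_subset[of A convex] unfolding A_def F_def by blast
      then have "inner a s < b" using ab(1) by blast
      then show "h s > 0" using c0 u1[OF s(1)] unfolding h_def by simp
    next
      fix s assume s: "s \<in> S" "e s = 1 \<and> f s = 0 \<or> e s = 0 \<and> f s = 1"
      then have sB: "s \<in> B" unfolding B_def F_def by blast
      have "c \<le> inner a s - b" using x0(2)[OF sB] unfolding c_def .
      then have "b - inner a s \<le> - c" by linarith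
      then have "(2 / c) * (b - inner a s) \<le> (2 / c) * (- c)"
        using c0 by (intro mult_left_mono) auto
      then show "h s < -1" using c0 u1[OF s(1)] unfolding h_def by simp
    qed
  qed
qed

theorem proposition7:
  fixes S :: "'a::euclidean_space set" and u :: "'a \<Rightarrow> real"
    and M1 M2 :: "pm \<Rightarrow> 'a \<Rightarrow> real"
  assumes "state_space S u"
    and "measurement S u dichotomic M1"
    and "measurement S u dichotomic M2"
  shows "max_incompatible S u M1 M2 \<longleftrightarrow>
    (Pbar S M1 M2 = 1 \<and>
     (\<exists>s1 s2 s3 s4. s1 \<in> S \<and> s2 \<in> S \<and> s3 \<in> S \<and> s4 \<in> S \<and>
        affine_dependent {s1, s2, s3, s4} \<and>
        M1 Plus s1 = 1 \<and> M1 Plus s2 = 1 \<and> M1 Plus s3 = 0 \<and> M1 Plus s4 = 0 \<and>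
        M2 Plus s1 = 1 \<and> M2 Plus s4 = 1 \<and> M2 Plus s2 = 0 \<and> M2 Plus s3 = 0))"
proof -
  note ss = assms(1) and m1 = assms(2) and m2 = assms(3)
  define e where "e = M1 Plus"
  define f where "f = M2 Plus"
  have le: "linear e" "linear f" "linear u"
    using meas_facts(1)[OF m1] meas_facts(1)[OF m2] ss_facts(1)[OF ss] unfolding e_def f_def by auto
  have eb: "\<And>s. s \<in> S \<Longrightarrow> 0 \<le> e s \<and> e s \<le> 1" "\<And>s. s \<in> S \<Longrightarrow> 0 \<le> f s \<and> f s \<le> 1"
    using meas_facts(2,3)[OF m1] meas_facts(2,3)[OF m2] unfolding e_def f_def by auto
  have u1: "\<And>s. s \<in> S \<Longrightarrow> u s = 1" using ss_facts(2)[OF ss] .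
  define P where "P = (\<exists>s1 s2 s3 s4. s1 \<in> S \<and> s2 \<in> S \<and> s3 \<in> S \<and> s4 \<in> S \<and>
        e s1 = 1 \<and> f s1 = 1 \<and> e s2 = 1 \<and> f s2 = 0 \<and> e s3 = 0 \<and> f s3 = 0 \<and>
        e s4 = 0 \<and> f s4 = 1 \<and> s1 + s3 = s2 + s4)"
  have rhs: "(Pbar S M1 M2 = 1 \<and>
     (\<exists>s1 s2 s3 s4. s1 \<in> S \<and> s2 \<in> S \<and> s3 \<in> S \<and> s4 \<in> S \<and>
        affine_dependent {s1, s2, s3, s4} \<and>
        M1 Plus s1 = 1 \<and> M1 Plus s2 = 1 \<and> M1 Plus s3 = 0 \<and> M1 Plus s4 = 0 \<and>
        M2 Plus s1 = 1 \<and> M2 Plus s4 = 1 \<and> M2 Plus s2 = 0 \<and> M2 Plus s3 = 0)) \<longleftrightarrow> P"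
  proof
    assume "Pbar S M1 M2 = 1 \<and>
     (\<exists>s1 s2 s3 s4. s1 \<in> S \<and> s2 \<in> S \<and> s3 \<in> S \<and> s4 \<in> S \<and>
        affine_dependent {s1, s2, s3, s4} \<and>
        M1 Plus s1 = 1 \<and> M1 Plus s2 = 1 \<and> M1 Plus s3 = 0 \<and> M1 Plus s4 = 0 \<and>
        M2 Plus s1 = 1 \<and> M2 Plus s4 = 1 \<and> M2 Plus s2 = 0 \<and> M2 Plus s3 = 0)"
    then obtain s1 s2 s3 s4 where st: "s1 \<in> S" "s2 \<in> S" "s3 \<in> S" "s4 \<in> S"
      and ad: "affine_dependent {s1, s2, s3, s4}"
      and v: "e s1 = 1" "e s2 = 1" "e s3 = 0" "e s4 = 0" "f s1 = 1" "f s4 = 1" "f s2 = 0" "f s3 = 0"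
      unfolding e_def f_def by blast
    have "s1 + s3 = s2 + s4"
      using aff_par[OF le u1[OF st(1)] u1[OF st(2)] u1[OF st(3)] u1[OF st(4)] v] ad by blast
    then show P unfolding P_def using st v by blast
  next
    assume P
    then obtain s1 s2 s3 s4 where st: "s1 \<in> S" "s2 \<in> S" "s3 \<in> S" "s4 \<in> S"
      and v: "e s1 = 1" "e s2 = 1" "e s3 = 0" "e s4 = 0" "f s1 = 1" "f s4 = 1" "f s2 = 0" "f s3 = 0"
      and par: "s1 + s3 = s2 + s4"
      unfolding P_def by blast
    have ad: "affine_dependent {s1, s2, s3, s4}"
      using aff_par[OF le u1[OF st(1)] u1[OF st(2)] u1[OF st(3)] u1[OF st(4)] v] par by blast
    have "Pbar S M1 M2 = 1" using pbar_one[OF ss m1 m2 st] v unfolding e_def f_def by blast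
    then show "Pbar S M1 M2 = 1 \<and>
     (\<exists>s1 s2 s3 s4. s1 \<in> S \<and> s2 \<in> S \<and> s3 \<in> S \<and> s4 \<in> S \<and>
        affine_dependent {s1, s2, s3, s4} \<and>
        M1 Plus s1 = 1 \<and> M1 Plus s2 = 1 \<and> M1 Plus s3 = 0 \<and> M1 Plus s4 = 0 \<and>
        M2 Plus s1 = 1 \<and> M2 Plus s4 = 1 \<and> M2 Plus s2 = 0 \<and> M2 Plus s3 = 0)"
      using st ad v unfolding e_def f_def by blast
  qed
  define L where "L = {l. 0 \<le> l \<and> l \<le> 1 \<and>
     (\<exists>T1 T2. trivial_meas u dichotomic T1 \<and> trivial_meas u dichotomic T2 \<and>
        compatible S u dichotomic dichotomic (\<lambda>x v. l * M1 x v + (1 - l) * T1 x v)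
                                (\<lambda>y v. l * M2 y v + (1 - l) * T2 y v))}"
  have mi: "max_incompatible S u M1 M2 \<longleftrightarrow> Sup L = 1/2"
    unfolding max_incompatible_def degree_incomp_def L_def by simp
  have bdd: "bdd_above L" unfolding L_def by (rule bdd_aboveI[of _ 1]) auto
  have half: "1/2 \<in> L"
  proof -
    have lk: "linear (\<lambda>v. (e v + f v) / 4)"
      using le unfolding linear_iff by (auto simp: field_simps)
    have "\<exists>T1 T2. trivial_meas u dichotomic T1 \<and> trivial_meas u dichotomic T2 \<and>
        compatible S u dichotomic dichotomic (\<lambda>x v. (1/2) * M1 x v + (1 - 1/2) * T1 x v)
                                (\<lambda>y v. (1/2) * M2 y v + (1 - 1/2) * T2 y v)"
    proof (rule compat_constr[OF ss m1 m2 lk])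
      fix s assume s: "s \<in> S"
      have b: "0 \<le> M1 Plus s" "M1 Plus s \<le> 1" "0 \<le> M2 Plus s" "M2 Plus s \<le> 1" "u s = 1"
        using eb[OF s] u1[OF s] unfolding e_def f_def by auto
      show "0 \<le> (e s + f s) / 4" using b unfolding e_def f_def by simp
      show "(e s + f s) / 4 \<le> 1 / 2 * M1 Plus s + (1 - 1 / 2) * (1 / 2 * u s)"
        using b unfolding e_def f_def by simp
      show "(e s + f s) / 4 \<le> 1 / 2 * M2 Plus s + (1 - 1 / 2) * (1 / 2 * u s)"
        using b unfolding e_def f_def by simp
      show "1 / 2 * M1 Plus s + (1 - 1 / 2) * (1 / 2 * u s) + (1 / 2 * M2 Plus s + (1 - 1 / 2) * (1 / 2 * u s)) -
          u s \<le> (e s + f s) / 4"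
        using b unfolding e_def f_def by simp
    qed
    then show ?thesis unfolding L_def by simp
  qed
  have "Sup L = 1/2 \<longleftrightarrow> P"
  proof
    assume P
    then obtain s1 s2 s3 s4 where st: "s1 \<in> S" "s2 \<in> S" "s3 \<in> S" "s4 \<in> S"
      and v: "e s1 = 1" "e s2 = 1" "e s3 = 0" "e s4 = 0" "f s1 = 1" "f s4 = 1" "f s2 = 0" "f s3 = 0"
      and par: "s1 + s3 = s2 + s4"
      unfolding P_def by blast
    show "Sup L = 1/2"
    proof (rule cSup_eq_maximum[OF half])
      fix l assume "l \<in> L"
      then obtain T1 T2 where "trivial_meas u dichotomic T1" "trivial_meas u dichotomic T2"
        "compatible S u dichotomic dichotomic (\<lambda>x v. l * M1 x v + (1 - l) * T1 x v)
                                (\<lambda>y v. l * M2 y v + (1 - l) * T2 y v)"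
        unfolding L_def by blast
      then show "l \<le> 1/2"
        using upper_half[OF ss m1 m2 st _ _ _ _ _ _ _ _ par] v unfolding e_def f_def by blast
    qed
  next
    assume sup: "Sup L = 1/2"
    show P
    proof (rule ccontr)
      assume nP: "\<not> P"
      obtain h :: "'a \<Rightarrow> real" where lh: "linear h"
        and hA: "\<forall>s\<in>S. (e s = 1 \<and> f s = 1) \<or> (e s = 0 \<and> f s = 0) \<longrightarrow> h s > 0"
        and hB: "\<forall>s\<in>S. (e s = 1 \<and> f s = 0) \<or> (e s = 0 \<and> f s = 1) \<longrightarrow> h s < -1"
        using sep[OF ss le(1,2)] nP unfolding P_def by blast
      have cS: "compact S" using ss_facts[OF ss] by auto
      have ce: "continuous_on S e" "continuous_on S f" "continuous_on S h"
        using lin_cont le lh by auto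
      have cs1: "continuous_on S (\<lambda>s. e s / 4 + f s / 4)"
        and cs4: "continuous_on S (\<lambda>s. 1/2 - e s / 4 - f s / 4)"
        and cs2: "continuous_on S (\<lambda>s. e s / 4 - f s / 4 + 1/4)"
        and cs3: "continuous_on S (\<lambda>s. f s / 4 - e s / 4 + 1/4)"
        and cg: "continuous_on S (\<lambda>s. - h s - 1)"
        using ce by (auto intro!: continuous_intros)
      have ebs: "0 \<le> e s" "e s \<le> 1" "0 \<le> f s" "f s \<le> 1" if "s \<in> S" for s
        using eb[OF that] by auto
      have n1: "0 \<le> e s / 4 + f s / 4" if "s \<in> S" for s using ebs[OF that] by linarith
      have n4: "0 \<le> 1/2 - e s / 4 - f s / 4" if "s \<in> S" for s using ebs[OF that] by linarith
      have n2: "0 \<le> e s / 4 - f s / 4 + 1/4" if "s \<in> S" for s using ebs[OF that] by linarith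
      have n3: "0 \<le> f s / 4 - e s / 4 + 1/4" if "s \<in> S" for s using ebs[OF that] by linarith
      have z1: "\<And>s. s \<in> S \<Longrightarrow> e s / 4 + f s / 4 = 0 \<Longrightarrow> h s > 0"
      proof -
        fix s assume s: "s \<in> S" "e s / 4 + f s / 4 = 0"
        then have "e s = 0 \<and> f s = 0" using ebs[OF s(1)] by (intro conjI; linarith)
        then show "h s > 0" using hA s(1) by blast
      qed
      have z4: "\<And>s. s \<in> S \<Longrightarrow> 1/2 - e s / 4 - f s / 4 = 0 \<Longrightarrow> h s > 0"
      proof -
        fix s assume s: "s \<in> S" "1/2 - e s / 4 - f s / 4 = 0"
        then have "e s = 1 \<and> f s = 1" using ebs[OF s(1)] by (intro conjI; linarith)
        then show "h s > 0" using hA s(1) by blast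
      qed
      have z2: "\<And>s. s \<in> S \<Longrightarrow> e s / 4 - f s / 4 + 1/4 = 0 \<Longrightarrow> - h s - 1 > 0"
      proof -
        fix s assume s: "s \<in> S" "e s / 4 - f s / 4 + 1/4 = 0"
        then have "e s = 0 \<and> f s = 1" using ebs[OF s(1)] by (intro conjI; linarith)
        then have "h s < -1" using hB s(1) by blast
        then show "- h s - 1 > 0" by linarith
      qed
      have z3: "\<And>s. s \<in> S \<Longrightarrow> f s / 4 - e s / 4 + 1/4 = 0 \<Longrightarrow> - h s - 1 > 0"
      proof -
        fix s assume s: "s \<in> S" "f s / 4 - e s / 4 + 1/4 = 0"
        then have "e s = 1 \<and> f s = 0" using ebs[OF s(1)] by (intro conjI; linarith)
        then have "h s < -1" using hB s(1) by blast
        then show "- h s - 1 > 0" by linarith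
      qed
      obtain \<eta>1 where \<eta>1: "\<eta>1 > 0" "\<forall>s\<in>S. \<forall>t. 0 \<le> t \<and> t \<le> \<eta>1 \<longrightarrow> 0 \<le> e s / 4 + f s / 4 + t * h s"
        using perturb[OF cS cs1 ce(3) n1 z1] by blast
      obtain \<eta>4 where \<eta>4: "\<eta>4 > 0" "\<forall>s\<in>S. \<forall>t. 0 \<le> t \<and> t \<le> \<eta>4 \<longrightarrow> 0 \<le> (1/2 - e s / 4 - f s / 4) + t * h s"
        using perturb[OF cS cs4 ce(3) n4 z4] by blast
      obtain \<eta>2 where \<eta>2: "\<eta>2 > 0" "\<forall>s\<in>S. \<forall>t. 0 \<le> t \<and> t \<le> \<eta>2 \<longrightarrow> 0 \<le> (e s / 4 - f s / 4 + 1/4) + t * (- h s - 1)"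
        using perturb[OF cS cs2 cg n2 z2] by blast
      obtain \<eta>3 where \<eta>3: "\<eta>3 > 0" "\<forall>s\<in>S. \<forall>t. 0 \<le> t \<and> t \<le> \<eta>3 \<longrightarrow> 0 \<le> (f s / 4 - e s / 4 + 1/4) + t * (- h s - 1)"
        using perturb[OF cS cs3 cg n3 z3] by blast
      define \<eta> where "\<eta> = min (min \<eta>1 \<eta>2) (min (min \<eta>3 \<eta>4) (1/2))"
      have \<eta>0: "0 < \<eta>" "\<eta> \<le> \<eta>1" "\<eta> \<le> \<eta>2" "\<eta> \<le> \<eta>3" "\<eta> \<le> \<eta>4" "\<eta> \<le> 1/2"
        unfolding \<eta>_def using \<eta>1 \<eta>2 \<eta>3 \<eta>4 by auto
      define l where "l = 1/2 + \<eta>"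
      define k where "k = (\<lambda>v. l / 2 * (e v + f v) + \<eta> * h v)"
      have lk: "linear k"
        using le lh unfolding k_def linear_iff by (auto simp: field_simps)
      have kx: "k s = e s / 4 + f s / 4 + \<eta> * e s / 2 + \<eta> * f s / 2 + \<eta> * h s" for s
        unfolding k_def l_def by (simp add: algebra_simps)
      have ex: "l * e s + (1 - l) * (1/2 * u s) = e s / 2 + \<eta> * e s + 1/4 - \<eta> / 2" if "s \<in> S" for s
        unfolding l_def using u1[OF that] by (simp add: algebra_simps)
      have fx: "l * f s + (1 - l) * (1/2 * u s) = f s / 2 + \<eta> * f s + 1/4 - \<eta> / 2" if "s \<in> S" for s
        unfolding l_def using u1[OF that] by (simp add: algebra_simps)
      have pr: "0 \<le> \<eta> * e s" "\<eta> * e s \<le> \<eta>" "0 \<le> \<eta> * f s" "\<eta> * f s \<le> \<eta>" if "s \<in> S" for s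
        using eb[OF that] \<eta>0(1) by (auto intro: mult_nonneg_nonneg mult_left_le)
      have "\<exists>T1 T2. trivial_meas u dichotomic T1 \<and> trivial_meas u dichotomic T2 \<and>
        compatible S u dichotomic dichotomic (\<lambda>x v. l * M1 x v + (1 - l) * T1 x v)
                                (\<lambda>y v. l * M2 y v + (1 - l) * T2 y v)"
      proof (rule compat_constr[OF ss m1 m2 lk])
        fix s assume s: "s \<in> S"
        have p1: "0 \<le> e s / 4 + f s / 4 + \<eta> * h s" using \<eta>1(2) s \<eta>0 by auto
        have p4: "0 \<le> (1/2 - e s / 4 - f s / 4) + \<eta> * h s" using \<eta>4(2) s \<eta>0 by auto
        have p2: "0 \<le> (e s / 4 - f s / 4 + 1/4) + \<eta> * (- h s - 1)" using \<eta>2(2) s \<eta>0 by auto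
        have p3: "0 \<le> (f s / 4 - e s / 4 + 1/4) + \<eta> * (- h s - 1)" using \<eta>3(2) s \<eta>0 by auto
        have hh: "\<eta> * (- h s - 1) = - (\<eta> * h s) - \<eta>" by (simp add: algebra_simps)
        note q = pr[OF s] kx[of s] ex[OF s] fx[OF s] hh
        show "0 \<le> k s" using p1 q by linarith
        show "k s \<le> l * M1 Plus s + (1 - l) * (1/2 * u s)" using p2 q unfolding e_def[symmetric] by linarith
        show "k s \<le> l * M2 Plus s + (1 - l) * (1/2 * u s)" using p3 q unfolding f_def[symmetric] by linarith
        show "(l * M1 Plus s + (1 - l) * (1/2 * u s)) + (l * M2 Plus s + (1 - l) * (1/2 * u s)) - u s \<le> k s"
          using p4 q u1[OF s] unfolding e_def[symmetric] f_def[symmetric] by linarith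
      qed
      then have "l \<in> L" unfolding L_def l_def using \<eta>0 by auto
      then have "l \<le> Sup L" using bdd by (rule cSup_upper)
      then show False using sup \<eta>0 unfolding l_def by linarith
    qed
  qed
  then show ?thesis using mi rhs by blast
qed

end
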